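(* Let $q=2^h$. In ${\rm PG}(4,q)$ with homogeneous coordinates $(X_1,\dots,X_5)$ let $\ell$ be the line $X_1=X_4=X_5=0$, $\Sigma$ the solid $X_1=0$, and $\mathcal H$ the hyperbolic quadric of $\Sigma$ with equation $X_2X_5+X_3X_4=0$. Let $\mathcal W(3,q)$ be the symplectic polar space of $\Sigma$ whose lines are the lines of $\Sigma$ totally isotropic for $B(x,y)=x_2y_5+x_5y_2+x_3y_4+x_4y_3$, and let $\mathcal T$ be the set of lines of $\mathcal W(3,q)$ having exactly one point in common with $\mathcal H\setminus\ell$. Let $\alpha\in{\rm GF}(q)$ be such that $X^2+X+\alpha$ is irreducible over ${\rm GF}(q)$ and let $G=\{M_{a,b,c,d}: a\in{\rm GF}(q)\setminus\{0\},\ b,c,d\in{\rm GF}(q),\ c^2+cd+\alpha d^2=1\}$, where $$M_{a,b,c,d}=\begin{pmatrix}1&0&0&0&0\\0&ac&\alpha ad&bc&\alpha bd\\0&ad&a(c+d)&bd&b(c+d)\\0&0&0&a^{-1}c&\alpha a^{-1}d\\0&0&0&a^{-1}d&a^{-1}(c+d)\end{pmatrix},$$ acting on points (column vectors) by left multiplication. Then $G$ acts transitively on $\mathcal T$. *)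

theory Defs
  imports "HOL-Analysis.Analysis" "HOL-Computational_Algebra.Polynomial" "HOL-Library.Numeral_Type"
begin

text \<open>Homogeneous coordinates (X1,...,X5) of PG(4,q) are vectors of type 'a^5,
  coordinate X_k being x$k (k = 1..5 as elements of the index type 5).\<close>

definition ix :: "5 \<Rightarrow> nat" where
  "ix i = (if i = 1 then 0 else if i = 2 then 1 else if i = 3 then 2 else if i = 4 then 3 else 4)"

definition mat_of_rows :: "'a list list \<Rightarrow> 'a ^ 5 ^ 5" where
  "mat_of_rows rs = (\<chi> i j. rs ! ix i ! ix j)"

definition Mabcd :: "'a::field \<Rightarrow> 'a \<Rightarrow> 'a \<Rightarrow> 'a \<Rightarrow> 'a \<Rightarrow> 'a ^ 5 ^ 5" where
  "Mabcd \<alpha> a b c d = mat_of_rows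
     [[1, 0, 0, 0, 0],
      [0, a*c, \<alpha>*a*d, b*c, \<alpha>*b*d],
      [0, a*d, a*(c+d), b*d, b*(c+d)],
      [0, 0, 0, inverse a * c, \<alpha> * inverse a * d],
      [0, 0, 0, inverse a * d, inverse a * (c+d)]]"

definition Ggrp :: "'a::field \<Rightarrow> ('a ^ 5 ^ 5) set" where
  "Ggrp \<alpha> = {Mabcd \<alpha> a b c d | a b c d. a \<noteq> 0 \<and> c^2 + c*d + \<alpha>*d^2 = 1}"

text \<open>Lines of PG(4,q) are represented by the 2-dimensional subspaces of 'a^5.\<close>
definition span2 :: "'a::field ^ 5 \<Rightarrow> 'a ^ 5 \<Rightarrow> ('a ^ 5) set" where
  "span2 u v = {(\<chi> i. s * u$i + t * v$i) | s t. True}"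

definition indep2 :: "'a::field ^ 5 \<Rightarrow> 'a ^ 5 \<Rightarrow> bool" where
  "indep2 u v \<longleftrightarrow> (\<forall>s t. (\<forall>i. s * u$i + t * v$i = 0) \<longrightarrow> s = 0 \<and> t = 0)"

definition is_pline :: "('a::field ^ 5) set \<Rightarrow> bool" where
  "is_pline L \<longleftrightarrow> (\<exists>u v. indep2 u v \<and> L = span2 u v)"

definition in_Sigma :: "'a::field ^ 5 \<Rightarrow> bool" where
  "in_Sigma x \<longleftrightarrow> x$1 = 0"

definition in_ell :: "'a::field ^ 5 \<Rightarrow> bool" where
  "in_ell x \<longleftrightarrow> x$1 = 0 \<and> x$4 = 0 \<and> x$5 = 0"

definition in_H :: "'a::field ^ 5 \<Rightarrow> bool" where
  "in_H x \<longleftrightarrow> x$1 = 0 \<and> x$2 * x$5 + x$3 * x$4 = 0"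

definition Bform :: "'a::field ^ 5 \<Rightarrow> 'a ^ 5 \<Rightarrow> 'a" where
  "Bform x y = x$2 * y$5 + x$5 * y$2 + x$3 * y$4 + x$4 * y$3"

definition W_line :: "('a::field ^ 5) set \<Rightarrow> bool" where
  "W_line L \<longleftrightarrow> is_pline L \<and> (\<forall>x\<in>L. in_Sigma x) \<and> (\<forall>x\<in>L. \<forall>y\<in>L. Bform x y = 0)"

definition one_pt_H_minus_ell :: "('a::field ^ 5) set \<Rightarrow> bool" where
  "one_pt_H_minus_ell L \<longleftrightarrow>
     (\<exists>x\<in>L. x \<noteq> 0 \<and> in_H x \<and> \<not> in_ell x \<and>
        (\<forall>y\<in>L. y \<noteq> 0 \<and> in_H y \<and> \<not> in_ell y \<longrightarrow> (\<exists>k. y = k *s x)))"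

definition Tset :: "('a::field ^ 5) set set" where
  "Tset = {L. W_line L \<and> one_pt_H_minus_ell L}"

definition act :: "'a::field ^ 5 ^ 5 \<Rightarrow> ('a ^ 5) set \<Rightarrow> ('a ^ 5) set" where
  "act M L = (\<lambda>x. M *v x) ` L"

end

theory Submission imports Defs begin

lemma exhaust_5:
  fixes x :: 5
  shows "x = 1 \<or> x = 2 \<or> x = 3 \<or> x = 4 \<or> x = 5"
proof (induct x)
  case (of_int z)
  then have "z = 0 \<or> z = 1 \<or> z = 2 \<or> z = 3 \<or> z = 4" by fastforce
  then show ?case by auto
qed

lemma UNIV_5: "UNIV = {1, 2, 3, 4, 5::5}"
  using exhaust_5 by auto

lemma forall_5: "(\<forall>i::5. P i) \<longleftrightarrow> P 1 \<and> P 2 \<and> P 3 \<and> P 4 \<and> P 5"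
  by (metis exhaust_5)

lemma sum_5: "sum f (UNIV::5 set) = f 1 + f 2 + f 3 + f 4 + f 5"
  unfolding UNIV_5 by (simp add: ac_simps)

lemma ix_simps[simp]: "ix 1 = 0" "ix 2 = 1" "ix 3 = 2" "ix 4 = 3" "ix 5 = 4"
  by (simp_all add: ix_def)

definition vec5 :: "'a \<Rightarrow> 'a \<Rightarrow> 'a \<Rightarrow> 'a \<Rightarrow> 'a \<Rightarrow> 'a ^ 5" where
  "vec5 x1 x2 x3 x4 x5 = (\<chi> i. [x1, x2, x3, x4, x5] ! ix i)"

lemma vec5_simps[simp]: "vec5 x1 x2 x3 x4 x5 $ 1 = x1" "vec5 x1 x2 x3 x4 x5 $ 2 = x2"
  "vec5 x1 x2 x3 x4 x5 $ 3 = x3" "vec5 x1 x2 x3 x4 x5 $ 4 = x4" "vec5 x1 x2 x3 x4 x5 $ 5 = x5"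
  by (simp_all add: vec5_def)

lemma vec5_eq_iff: "(x::'a^5) = y \<longleftrightarrow> x$1 = y$1 \<and> x$2 = y$2 \<and> x$3 = y$3 \<and> x$4 = y$4 \<and> x$5 = y$5"
  by (simp add: vec_eq_iff forall_5)

definition mvf :: "'a::field \<Rightarrow> 'a \<Rightarrow> 'a \<Rightarrow> 'a \<Rightarrow> 'a \<Rightarrow> 'a \<Rightarrow> 'a ^ 5 \<Rightarrow> 'a ^ 5" where
  "mvf \<alpha> a ai b c d x = vec5 (x$1)
     (a*c*x$2 + \<alpha>*a*d*x$3 + b*c*x$4 + \<alpha>*b*d*x$5)
     (a*d*x$2 + a*(c+d)*x$3 + b*d*x$4 + b*(c+d)*x$5)
     (ai*c*x$4 + \<alpha>*ai*d*x$5)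
     (ai*d*x$4 + ai*(c+d)*x$5)"

lemma Mv_mvf: "Mabcd \<alpha> a b c d *v x = mvf \<alpha> a (inverse a) b c d x"
  by (simp add: vec5_eq_iff Mabcd_def mat_of_rows_def matrix_vector_mult_def sum_5 mvf_def)

lemma mvf_inv:
  assumes "a*ai = 1" "c*(c+d) - \<alpha>*d*d = 1"
  shows "mvf \<alpha> ai a (-b) (c+d) (-d) (mvf \<alpha> a ai b c d x) = x"
  using assms unfolding vec5_eq_iff mvf_def vec5_simps
  apply (intro conjI)
  apply simp
  apply algebra+
  done

lemma mvf_inv2:
  assumes "a*ai = 1" "c*(c+d) - \<alpha>*d*d = 1"
  shows "mvf \<alpha> a ai b c d (mvf \<alpha> ai a (-b) (c+d) (-d) x) = x"
  using assms unfolding vec5_eq_iff mvf_def vec5_simps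
  apply (intro conjI)
  apply simp
  apply algebra+
  done

lemma mvf_comp:
  "mvf \<alpha> a1 ai1 b1 c1 d1 (mvf \<alpha> a2 ai2 b2 c2 d2 x) =
   mvf \<alpha> (a1*a2) (ai1*ai2) (a1*b2 + b1*ai2) (c1*c2 + \<alpha>*d1*d2) (c1*d2 + d1*c2 + d1*d2) x"
  unfolding vec5_eq_iff mvf_def vec5_simps
  apply (intro conjI)
  apply simp
  apply algebra+
  done

lemma det_mult:
  fixes c1 :: "'a::comm_ring_1"
  shows "(c1*c2 + \<alpha>*d1*d2)*((c1*c2 + \<alpha>*d1*d2) + (c1*d2 + d1*c2 + d1*d2)) - \<alpha>*(c1*d2 + d1*c2 + d1*d2)*(c1*d2 + d1*c2 + d1*d2)
   = (c1*(c1+d1) - \<alpha>*d1*d1) * (c2*(c2+d2) - \<alpha>*d2*d2)"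
  by (simp add: algebra_simps)

lemma mvf_Q:
  assumes "a*ai = 1"
  shows "(mvf \<alpha> a ai b c d x)$2 * (mvf \<alpha> a ai b c d x)$5 - (mvf \<alpha> a ai b c d x)$3 * (mvf \<alpha> a ai b c d x)$4
     = (c*(c+d) - \<alpha>*d*d) * (x$2*x$5 - x$3*x$4)"
  using assms unfolding mvf_def vec5_simps by algebra

lemma mvf_B:
  assumes "a*ai = 1"
  shows "(mvf \<alpha> a ai b c d x)$2 * (mvf \<alpha> a ai b c d y)$5 + (mvf \<alpha> a ai b c d x)$5 * (mvf \<alpha> a ai b c d y)$2
       - (mvf \<alpha> a ai b c d x)$3 * (mvf \<alpha> a ai b c d y)$4 - (mvf \<alpha> a ai b c d x)$4 * (mvf \<alpha> a ai b c d y)$3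
     = (c*(c+d) - \<alpha>*d*d) * (x$2*y$5 + x$5*y$2 - x$3*y$4 - x$4*y$3)"
  using assms unfolding mvf_def vec5_simps by algebra


section \<open>char 2\<close>

lemma neg_self: fixes y :: "'a::field" assumes two: "(1::'a::field) + 1 = 0" shows "- y = y"
proof -
  have "y + y = (1 + 1) * y" by (simp only: distrib_right mult_1)
  also have "\<dots> = 0" by (simp only: two mult_zero_left)
  finally show "- y = y" by (simp only: neg_eq_iff_add_eq_0)
qed

lemma minus_plus: fixes x y :: "'a::field" assumes two: "(1::'a) + 1 = 0" shows "x - y = x + y"
proof -
  have e: "- y = y" by (rule neg_self[OF two])
  have "x - y = x + (- y)" by (rule diff_conv_add_uminus)
  also have "\<dots> = x + y" by (simp only: e)
  finally show ?thesis .
qed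

lemma N_D: fixes c d \<alpha> :: "'a::field" assumes two: "(1::'a::field) + 1 = 0"
  shows "c^2 + c*d + \<alpha>*d^2 = c*(c+d) - \<alpha>*d*d"
proof -
  have "c*(c+d) + \<alpha>*d*d = c^2 + c*d + \<alpha>*d^2" by algebra
  then show ?thesis by (simp only: minus_plus[OF two])
qed

lemma inH_alt: fixes y :: "'a::field^5" assumes two: "(1::'a::field) + 1 = 0"
  shows "in_H y \<longleftrightarrow> y$1 = 0 \<and> y$2*y$5 - y$3*y$4 = 0"
  by (simp only: in_H_def minus_plus[OF two])

lemma B_alt: fixes x y :: "'a::field^5" assumes two: "(1::'a::field) + 1 = 0"
  shows "Bform x y = x$2*y$5 + x$5*y$2 - x$3*y$4 - x$4*y$3"
  by (simp only: Bform_def minus_plus[OF two])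

lemma Ggrp_iff: "M \<in> Ggrp \<alpha> \<longleftrightarrow> (\<exists>a b c d. M = Mabcd \<alpha> a b c d \<and> a \<noteq> 0 \<and> c^2 + c*d + \<alpha>*d^2 = 1)"
  unfolding Ggrp_def by blast

lemma GgrpI: "a \<noteq> 0 \<Longrightarrow> c^2 + c*d + \<alpha>*d^2 = 1 \<Longrightarrow> Mabcd \<alpha> a b c d \<in> Ggrp \<alpha>"
  unfolding Ggrp_def by blast

lemma M_inv:
  fixes \<alpha> :: "'a::field"
  assumes two: "(1::'a::field) + 1 = 0" and a: "a \<noteq> 0" and N: "c^2 + c*d + \<alpha>*d^2 = 1"
  shows "Mabcd \<alpha> (inverse a) (-b) (c+d) (-d) *v (Mabcd \<alpha> a b c d *v x) = x"
    "Mabcd \<alpha> a b c d *v (Mabcd \<alpha> (inverse a) (-b) (c+d) (-d) *v x) = x"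
    "Mabcd \<alpha> (inverse a) (-b) (c+d) (-d) \<in> Ggrp \<alpha>"
proof -
  have D: "c*(c+d) - \<alpha>*d*d = 1" using N N_D[OF two, of c d \<alpha>] by simp
  have ai: "a * inverse a = 1" using a by simp
  show "Mabcd \<alpha> (inverse a) (-b) (c+d) (-d) *v (Mabcd \<alpha> a b c d *v x) = x"
    using mvf_inv[OF ai D] a by (simp add: Mv_mvf)
  show "Mabcd \<alpha> a b c d *v (Mabcd \<alpha> (inverse a) (-b) (c+d) (-d) *v x) = x"
    using mvf_inv2[OF ai D] a by (simp add: Mv_mvf)
  have "(c+d)^2 + (c+d)*(-d) + \<alpha>*(-d)^2 = c^2 + c*d + \<alpha>*d^2"
    by (simp add: algebra_simps power2_eq_square)
  then show "Mabcd \<alpha> (inverse a) (-b) (c+d) (-d) \<in> Ggrp \<alpha>"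
    using a N by (intro GgrpI) simp_all
qed

lemma M_comp:
  fixes \<alpha> :: "'a::field"
  assumes two: "(1::'a::field) + 1 = 0" and a1: "a1 \<noteq> 0" and N1: "c1^2 + c1*d1 + \<alpha>*d1^2 = 1"
    and a2: "a2 \<noteq> 0" and N2: "c2^2 + c2*d2 + \<alpha>*d2^2 = 1"
  shows "Mabcd \<alpha> a1 b1 c1 d1 *v (Mabcd \<alpha> a2 b2 c2 d2 *v x) =
     Mabcd \<alpha> (a1*a2) (a1*b2 + b1*inverse a2) (c1*c2 + \<alpha>*d1*d2) (c1*d2 + d1*c2 + d1*d2) *v x"
    "Mabcd \<alpha> (a1*a2) (a1*b2 + b1*inverse a2) (c1*c2 + \<alpha>*d1*d2) (c1*d2 + d1*c2 + d1*d2) \<in> Ggrp \<alpha>"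
proof -
  show "Mabcd \<alpha> a1 b1 c1 d1 *v (Mabcd \<alpha> a2 b2 c2 d2 *v x) =
     Mabcd \<alpha> (a1*a2) (a1*b2 + b1*inverse a2) (c1*c2 + \<alpha>*d1*d2) (c1*d2 + d1*c2 + d1*d2) *v x"
    by (simp add: Mv_mvf mvf_comp inverse_mult_distrib)
  have "(c1*c2 + \<alpha>*d1*d2)^2 + (c1*c2 + \<alpha>*d1*d2)*(c1*d2 + d1*c2 + d1*d2) + \<alpha>*(c1*d2 + d1*c2 + d1*d2)^2
     = (c1*c2 + \<alpha>*d1*d2)*((c1*c2 + \<alpha>*d1*d2) + (c1*d2 + d1*c2 + d1*d2)) - \<alpha>*(c1*d2 + d1*c2 + d1*d2)*(c1*d2 + d1*c2 + d1*d2)"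
    by (rule N_D[OF two])
  also have "\<dots> = (c1*(c1+d1) - \<alpha>*d1*d1) * (c2*(c2+d2) - \<alpha>*d2*d2)"
    by (rule det_mult)
  also have "\<dots> = 1" using N1 N2 N_D[OF two, of c1 d1 \<alpha>] N_D[OF two, of c2 d2 \<alpha>] by simp
  finally show "Mabcd \<alpha> (a1*a2) (a1*b2 + b1*inverse a2) (c1*c2 + \<alpha>*d1*d2) (c1*d2 + d1*c2 + d1*d2) \<in> Ggrp \<alpha>"
    using a1 a2 by (intro GgrpI) simp_all
qed

lemma M_lin: "Mabcd \<alpha> a b c d *v (\<chi> i. s*u$i + t * v$i) =
    (\<chi> i. s*(Mabcd \<alpha> a b c d *v u)$i + t * (Mabcd \<alpha> a b c d *v v)$i)"
  by (simp add: Mv_mvf vec5_eq_iff mvf_def algebra_simps)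

lemma M_smult: "Mabcd \<alpha> a b c d *v (k *s x) = k *s (Mabcd \<alpha> a b c d *v x)"
  by (simp add: Mv_mvf vec5_eq_iff mvf_def algebra_simps)

lemma M_zero: "Mabcd \<alpha> a b c d *v 0 = 0"
  by (simp add: Mv_mvf vec5_eq_iff mvf_def)

lemma M_Sigma: "in_Sigma (Mabcd \<alpha> a b c d *v x) \<longleftrightarrow> in_Sigma x"
  by (simp add: Mv_mvf mvf_def in_Sigma_def)

lemma M_ell1: "in_ell x \<Longrightarrow> in_ell (Mabcd \<alpha> a b c d *v x)"
  by (simp add: Mv_mvf mvf_def in_ell_def)

lemma M_ell:
  fixes \<alpha> :: "'a::field"
  assumes two: "(1::'a::field) + 1 = 0" and a: "a \<noteq> 0" and N: "c^2 + c*d + \<alpha>*d^2 = 1"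
  shows "in_ell (Mabcd \<alpha> a b c d *v x) \<longleftrightarrow> in_ell x"
proof
  assume h: "in_ell (Mabcd \<alpha> a b c d *v x)"
  from M_ell1[OF h, of \<alpha> "inverse a" "-b" "c+d" "-d"] show "in_ell x"
    by (simp only: M_inv(1)[OF two a N])
next
  assume "in_ell x" then show "in_ell (Mabcd \<alpha> a b c d *v x)" by (rule M_ell1)
qed

lemma M_H:
  fixes \<alpha> :: "'a::field"
  assumes two: "(1::'a::field) + 1 = 0" and a: "a \<noteq> 0" and N: "c^2 + c*d + \<alpha>*d^2 = 1"
  shows "in_H (Mabcd \<alpha> a b c d *v x) \<longleftrightarrow> in_H x"
proof -
  have D: "c*(c+d) - \<alpha>*d*d = 1" using N N_D[OF two, of c d \<alpha>] by simp
  have ai: "a * inverse a = 1" using a by simp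
  have q: "(Mabcd \<alpha> a b c d *v x)$2*(Mabcd \<alpha> a b c d *v x)$5 - (Mabcd \<alpha> a b c d *v x)$3*(Mabcd \<alpha> a b c d *v x)$4
     = x$2*x$5 - x$3*x$4"
    unfolding Mv_mvf using mvf_Q[OF ai, of \<alpha> b c d x] D by simp
  have 1: "(Mabcd \<alpha> a b c d *v x)$1 = x$1" by (simp add: Mv_mvf mvf_def)
  show ?thesis unfolding inH_alt[OF two] q 1 ..
qed

lemma M_B:
  fixes \<alpha> :: "'a::field"
  assumes two: "(1::'a::field) + 1 = 0" and a: "a \<noteq> 0" and N: "c^2 + c*d + \<alpha>*d^2 = 1"
  shows "Bform (Mabcd \<alpha> a b c d *v x) (Mabcd \<alpha> a b c d *v y) = Bform x y"
proof -
  have D: "c*(c+d) - \<alpha>*d*d = 1" using N N_D[OF two, of c d \<alpha>] by simp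
  have ai: "a * inverse a = 1" using a by simp
  show ?thesis unfolding B_alt[OF two] using mvf_B[OF ai, of \<alpha> b c d x y] D
    by (simp only: Mv_mvf mult_1)
qed

lemma inv_even:
  assumes "finite A" "\<forall>x\<in>A. f x \<in> A \<and> f (f x) = x \<and> f x \<noteq> x"
  shows "even (card A)"
  using assms
proof (induction "card A" arbitrary: A rule: less_induct)
  case less
  show ?case
  proof (cases "A = {}")
    case True then show ?thesis by simp
  next
    case False
    then obtain x where x: "x \<in> A" by blast
    define B where "B = A - {x, f x}"
    have fx: "f x \<in> A" "f x \<noteq> x" using less.prems(2) x by auto
    have sub: "{x, f x} \<subseteq> A" using x fx by auto
    have c2: "card {x, f x} = 2" using fx by simp
    have cA: "card A = card B + 2"
      using card_Diff_subset[OF _ sub] less.prems(1) c2 card_mono[OF less.prems(1) sub]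
      unfolding B_def by (simp add: finite_subset)
    have finB: "finite B" using less.prems(1) unfolding B_def by simp
    have clB: "\<forall>y\<in>B. f y \<in> B \<and> f (f y) = y \<and> f y \<noteq> y"
    proof
      fix y assume y: "y \<in> B"
      then have yA: "y \<in> A" and yx: "y \<noteq> x" "y \<noteq> f x" unfolding B_def by auto
      have p: "f y \<in> A" "f (f y) = y" "f y \<noteq> y" using less.prems(2) yA by auto
      have "f y \<noteq> x" using p(2) yx(2) by auto
      moreover have "f y \<noteq> f x" using p(2) yx(1) less.prems(2) x by metis
      ultimately show "f y \<in> B \<and> f (f y) = y \<and> f y \<noteq> y" using p unfolding B_def by auto
    qed
    have "even (card B)" using less.hyps[of B] cA finB clB by simp
    then show ?thesis using cA by simp
  qed
qed

lemma char2_of_card: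
  assumes "CARD('a::field) = 2 ^ h"
  shows "(1::'a) + 1 = 0"
proof (rule ccontr)
  assume ne: "(1::'a) + 1 \<noteq> 0"
  have fin: "finite (UNIV::'a set)" using assms card.infinite by fastforce
  have "\<forall>x\<in>UNIV - {0::'a}. - x \<in> UNIV - {0} \<and> - (- x) = x \<and> - x \<noteq> x"
  proof
    fix x :: 'a assume "x \<in> UNIV - {0}"
    then have x0: "x \<noteq> 0" by simp
    have "(1 + 1) * x \<noteq> 0" using ne x0 by simp
    then have "x + x \<noteq> 0" by (simp add: distrib_right)
    then have "- x \<noteq> x" by (metis neg_eq_iff_add_eq_0)
    then show "- x \<in> UNIV - {0} \<and> - (- x) = x \<and> - x \<noteq> x" using x0 by simp
  qed
  then have ev: "even (card (UNIV - {0::'a}))" using inv_even[of "UNIV - {0::'a}" uminus] fin by simp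
  have "card (UNIV::'a set) = card (UNIV - {0::'a}) + 1"
    using card_Suc_Diff1[OF fin, of 0] by simp
  then have odd: "odd (card (UNIV::'a set))" using ev by simp
  have "h \<noteq> 0"
  proof
    assume "h = 0"
    then have "card (UNIV::'a set) = 1" using assms by simp
    moreover have "card {0::'a, 1} \<le> card (UNIV::'a set)" using fin by (intro card_mono) auto
    ultimately show False by simp
  qed
  then have "even (card (UNIV::'a set))" using assms by simp
  then show False using odd by simp
qed

lemma sq_surj:
  assumes "CARD('a::field) = 2 ^ h"
  shows "\<exists>r::'a. r * r = n"
proof -
  have fin: "finite (UNIV::'a set)" using assms card.infinite by fastforce
  have two: "(1::'a) + 1 = 0" using char2_of_card[OF assms] .
  have "inj (\<lambda>x::'a. x * x)"
  proof
    fix x y :: 'a assume "x * x = y * y"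
    then have "(x + y) * (x + y) = (1+1) * (x*y) + (1+1)*(y*y)" by (simp add: algebra_simps)
    then have "(x + y) * (x + y) = 0" using two by simp
    then have "x + y = 0" by simp
    then have "x = - y" by (simp add: eq_neg_iff_add_eq_0)
    moreover have "- y = y" using two by (metis add_eq_0_iff2 distrib_left mult.right_neutral mult_zero_right)
    ultimately show "x = y" by simp
  qed
  then have "surj (\<lambda>x::'a. x * x)" by (rule finite_UNIV_inj_surj[OF fin])
  from surjD[OF this, of n] obtain r where "n = r * r" by blast
  then show ?thesis by auto
qed

lemma no_root:
  fixes \<alpha> :: "'a::field"
  assumes "irreducible [:\<alpha>, 1, 1:]"
  shows "r * r + r + \<alpha> \<noteq> 0"
proof
  assume h: "r * r + r + \<alpha> = 0"
  have "poly [:\<alpha>, 1, 1:] r = 0" using h by (simp add: algebra_simps)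
  then have "[:-r, 1:] dvd [:\<alpha>, 1, 1:]" by (rule poly_eq_0_iff_dvd[THEN iffD1])
  then obtain q where q: "[:\<alpha>, 1, 1:] = [:-r, 1:] * q" by (elim dvdE)
  have "q \<noteq> 0" using q by auto
  have "degree [:\<alpha>, 1, 1:] = 2" by simp
  moreover have "degree ([:-r, 1:] * q) = degree [:-r, 1:] + degree q"
    using \<open>q \<noteq> 0\<close> by (intro degree_mult_eq) auto
  ultimately have "degree q = 1" using q by simp
  from irreducibleD[OF assms q] show False
    using \<open>degree q = 1\<close> \<open>q \<noteq> 0\<close> by (auto simp: is_unit_iff_degree)
qed

lemma norm_nz:
  fixes \<alpha> :: "'a::field"
  assumes "irreducible [:\<alpha>, 1, 1:]" "x \<noteq> 0 \<or> y \<noteq> 0"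
  shows "x*x + x*y + \<alpha>*y*y \<noteq> 0"
proof (cases "y = 0")
  case True then show ?thesis using assms by simp
next
  case False
  have "(x/y)*(x/y) + x/y + \<alpha> \<noteq> 0" using no_root[OF assms(1)] .
  then have "((x/y)*(x/y) + x/y + \<alpha>) * (y*y) \<noteq> 0" using False by simp
  moreover have "((x/y)*(x/y) + x/y + \<alpha>) * (y*y) = x*x + x*y + \<alpha>*y*y"
    using False by (simp add: field_simps)
  ultimately show ?thesis by argo
qed


lemma G_inv:
  fixes \<alpha> :: "'a::field"
  assumes two: "(1::'a) + 1 = 0" and M: "M \<in> Ggrp \<alpha>"
  shows "\<exists>M'\<in>Ggrp \<alpha>. (\<forall>x. M' *v (M *v x) = x) \<and> (\<forall>x. M *v (M' *v x) = x)"
proof -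
  obtain a b c d where M: "M = Mabcd \<alpha> a b c d" and a: "a \<noteq> 0" and N: "c^2 + c*d + \<alpha>*d^2 = 1"
    using M unfolding Ggrp_iff by blast
  show ?thesis unfolding M using M_inv[OF two a N] by blast
qed

lemma G_comp:
  fixes \<alpha> :: "'a::field"
  assumes two: "(1::'a) + 1 = 0" and M1: "M1 \<in> Ggrp \<alpha>" and M2: "M2 \<in> Ggrp \<alpha>"
  shows "\<exists>M\<in>Ggrp \<alpha>. \<forall>x. M *v x = M1 *v (M2 *v x)"
proof -
  obtain a1 b1 c1 d1 where M1: "M1 = Mabcd \<alpha> a1 b1 c1 d1" and a1: "a1 \<noteq> 0" and N1: "c1^2 + c1*d1 + \<alpha>*d1^2 = 1"
    using M1 unfolding Ggrp_iff by blast
  obtain a2 b2 c2 d2 where M2: "M2 = Mabcd \<alpha> a2 b2 c2 d2" and a2: "a2 \<noteq> 0" and N2: "c2^2 + c2*d2 + \<alpha>*d2^2 = 1"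
    using M2 unfolding Ggrp_iff by blast
  show ?thesis unfolding M1 M2 using M_comp[OF two a1 N1 a2 N2] by metis
qed

lemma G_lin:
  assumes "M \<in> Ggrp \<alpha>"
  shows "M *v (\<chi> i. s*u$i + t * v$i) = (\<chi> i. s*(M *v u)$i + t * (M *v v)$i)"
    "M *v (k *s x) = k *s (M *v x)" "M *v 0 = 0"
  using assms unfolding Ggrp_iff by (auto simp: M_lin M_smult M_zero)

lemma span2_mem: "x \<in> span2 u v \<longleftrightarrow> (\<exists>s t. x = (\<chi> i. s * u$i + t * v$i))"
  unfolding span2_def by blast

lemma span2_comb:
  assumes "x \<in> span2 u v" "y \<in> span2 u v"
  shows "(\<chi> i. s * x$i + t * y$i) \<in> span2 u v"
proof -
  obtain p1 q1 where x: "x = (\<chi> i. p1 * u$i + q1 * v$i)" using assms(1) unfolding span2_mem by blast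
  obtain p2 q2 where y: "y = (\<chi> i. p2 * u$i + q2 * v$i)" using assms(2) unfolding span2_mem by blast
  have "(\<chi> i. s * x$i + t * y$i) = (\<chi> i. (s * p1 + t * p2) * u$i + (s * q1 + t * q2) * v$i)"
    unfolding x y by (simp add: vec_eq_iff algebra_simps)
  then show ?thesis unfolding span2_mem by blast
qed

lemma span2_smult: "x \<in> span2 u v \<Longrightarrow> k *s x \<in> span2 u v"
proof -
  assume x: "x \<in> span2 u v"
  have "k *s x = (\<chi> i. k * x$i)" by (simp add: vec_eq_iff)
  then show ?thesis using span2_comb[OF x x, of k 0] by simp
qed

lemma span2_left: "u \<in> span2 u v"
  unfolding span2_mem by (rule exI[of _ 1], rule exI[of _ 0]) (simp add: vec_eq_iff)

lemma span2_right: "v \<in> span2 u v"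
  unfolding span2_mem by (rule exI[of _ 0], rule exI[of _ 1]) (simp add: vec_eq_iff)

lemma span2_sub: "u' \<in> span2 u v \<Longrightarrow> v' \<in> span2 u v \<Longrightarrow> span2 u' v' \<subseteq> span2 u v"
proof
  fix x assume "u' \<in> span2 u v" "v' \<in> span2 u v" "x \<in> span2 u' v'"
  then show "x \<in> span2 u v" using span2_comb unfolding span2_mem[of x u' v'] by blast
qed

lemma span2_eqI: "u' \<in> span2 u v \<Longrightarrow> v' \<in> span2 u v \<Longrightarrow> u \<in> span2 u' v' \<Longrightarrow> v \<in> span2 u' v'
  \<Longrightarrow> span2 u v = span2 u' v'"
  using span2_sub by blast

lemma is_pline_smult: "is_pline L \<Longrightarrow> x \<in> L \<Longrightarrow> k *s x \<in> L"
  unfolding is_pline_def using span2_smult by blast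

lemma act_span2:
  assumes "M \<in> Ggrp \<alpha>"
  shows "act M (span2 u v) = span2 (M *v u) (M *v v)"
proof -
  have "act M (span2 u v) = {M *v (\<chi> i. s * u$i + t * v$i) | s t. True}"
    unfolding act_def span2_def by blast
  also have "\<dots> = {(\<chi> i. s * (M *v u)$i + t * (M *v v)$i) | s t. True}"
    by (simp only: G_lin(1)[OF assms])
  finally show ?thesis unfolding span2_def .
qed

lemma span2_change:
  fixes u v w :: "'a::field ^ 5"
  assumes ind: "indep2 u v" and w: "w \<in> span2 u v" and w0: "w \<noteq> 0"
  shows "\<exists>z. indep2 w z \<and> span2 u v = span2 w z"
proof -
  obtain s0 t0 where w: "w = (\<chi> i. s0 * u$i + t0 * v$i)" using w unfolding span2_mem by blast
  show ?thesis
  proof (cases "s0 = 0")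
    case False
    have "indep2 w v" unfolding indep2_def
    proof (intro allI impI)
      fix s t assume h: "\<forall>i. s * w$i + t * v$i = 0"
      have "\<forall>i. (s * s0) * u$i + (s * t0 + t) * v$i = 0"
        using h unfolding w by (simp add: algebra_simps)
      then have "s * s0 = 0 \<and> s * t0 + t = 0" using ind unfolding indep2_def by blast
      then show "s = 0 \<and> t = 0" using False by auto
    qed
    moreover have "span2 u v = span2 w v"
    proof (rule span2_eqI)
      show "w \<in> span2 u v" unfolding w span2_mem by blast
      show "v \<in> span2 u v" by (rule span2_right)
      show "v \<in> span2 w v" by (rule span2_right)
      have "u = (\<chi> i. (1/s0) * w$i + (- t0/s0) * v$i)"
        unfolding w using False by (simp add: vec_eq_iff field_simps)
      then show "u \<in> span2 w v" unfolding span2_mem by blast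
    qed
    ultimately show ?thesis by blast
  next
    case True
    then have t0: "t0 \<noteq> 0" using w0 w by (auto simp: vec_eq_iff)
    have "indep2 w u" unfolding indep2_def
    proof (intro allI impI)
      fix s t assume h: "\<forall>i. s * w$i + t * u$i = 0"
      have "\<forall>i. t * u$i + (s * t0) * v$i = 0"
        using h True unfolding w by (simp add: algebra_simps)
      then have "t = 0 \<and> s * t0 = 0" using ind unfolding indep2_def by blast
      then show "s = 0 \<and> t = 0" using t0 by simp
    qed
    moreover have "span2 u v = span2 w u"
    proof (rule span2_eqI)
      show "w \<in> span2 u v" unfolding w span2_mem by blast
      show "u \<in> span2 u v" by (rule span2_left)
      show "u \<in> span2 w u" by (rule span2_right)
      have "v = (\<chi> i. (1/t0) * w$i + 0 * u$i)"
        unfolding w using True t0 by (simp add: vec_eq_iff field_simps)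
      then show "v \<in> span2 w u" unfolding span2_mem by blast
    qed
    ultimately show ?thesis by blast
  qed
qed


lemma G_props:
  fixes \<alpha> :: "'a::field"
  assumes two: "(1::'a) + 1 = 0" and M: "M \<in> Ggrp \<alpha>"
  shows "in_Sigma (M *v x) \<longleftrightarrow> in_Sigma x" "in_H (M *v x) \<longleftrightarrow> in_H x"
    "in_ell (M *v x) \<longleftrightarrow> in_ell x" "Bform (M *v x) (M *v y) = Bform x y"
proof -
  obtain a b c d where M: "M = Mabcd \<alpha> a b c d" and a: "a \<noteq> 0" and N: "c^2 + c*d + \<alpha>*d^2 = 1"
    using M unfolding Ggrp_iff by blast
  show "in_Sigma (M *v x) \<longleftrightarrow> in_Sigma x" unfolding M by (rule M_Sigma)
  show "in_H (M *v x) \<longleftrightarrow> in_H x" unfolding M by (rule M_H[OF two a N])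
  show "in_ell (M *v x) \<longleftrightarrow> in_ell x" unfolding M by (rule M_ell[OF two a N])
  show "Bform (M *v x) (M *v y) = Bform x y" unfolding M by (rule M_B[OF two a N])
qed

lemma G_nz:
  fixes \<alpha> :: "'a::field"
  assumes two: "(1::'a) + 1 = 0" and M: "M \<in> Ggrp \<alpha>"
  shows "M *v x = 0 \<longleftrightarrow> x = 0"
proof
  assume h: "M *v x = 0"
  obtain M' where M': "M' \<in> Ggrp \<alpha>" "\<forall>x. M' *v (M *v x) = x" using G_inv[OF two M] by blast
  have "x = M' *v (M *v x)" using M' by simp
  also have "\<dots> = 0" using h G_lin(3)[OF M'(1)] by simp
  finally show "x = 0" .
next
  assume "x = 0" then show "M *v x = 0" using G_lin(3)[OF M] by simp
qed

lemma pres: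
  fixes \<alpha> :: "'a::field"
  assumes two: "(1::'a) + 1 = 0" and M: "M \<in> Ggrp \<alpha>" and L: "L \<in> Tset"
  shows "act M L \<in> Tset"
proof -
  have W: "W_line L" and Ol: "one_pt_H_minus_ell L" using L unfolding Tset_def by auto
  obtain u v where uv: "indep2 u v" "L = span2 u v" using W unfolding W_line_def is_pline_def by blast
  have actL: "act M L = span2 (M *v u) (M *v v)" unfolding uv(2) by (rule act_span2[OF M])
  have "indep2 (M *v u) (M *v v)" unfolding indep2_def
  proof (intro allI impI)
    fix s t assume h: "\<forall>i. s * (M *v u)$i + t * (M *v v)$i = 0"
    have "M *v (\<chi> i. s * u$i + t * v$i) = 0" unfolding G_lin(1)[OF M] using h by (simp add: vec_eq_iff)
    then have "(\<chi> i. s * u$i + t * v$i) = 0" using G_nz[OF two M] by blast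
    then have "\<forall>i. s * u$i + t * v$i = 0" by (simp add: vec_eq_iff)
    then show "s = 0 \<and> t = 0" using uv(1) unfolding indep2_def by blast
  qed
  then have pl: "is_pline (act M L)" unfolding is_pline_def actL by blast
  have sig: "\<forall>x\<in>act M L. in_Sigma x"
    using W G_props(1)[OF two M] unfolding W_line_def act_def by auto
  have bf: "\<forall>x\<in>act M L. \<forall>y\<in>act M L. Bform x y = 0"
    using W G_props(4)[OF two M] unfolding W_line_def act_def by auto
  obtain P where P: "P \<in> L" "P \<noteq> 0" "in_H P" "\<not> in_ell P"
    and Pu: "\<forall>y\<in>L. y \<noteq> 0 \<and> in_H y \<and> \<not> in_ell y \<longrightarrow> (\<exists>k. y = k *s P)"
    using Ol unfolding one_pt_H_minus_ell_def by blast
  have "one_pt_H_minus_ell (act M L)" unfolding one_pt_H_minus_ell_def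
  proof (intro bexI conjI ballI impI)
    show "M *v P \<in> act M L" using P(1) unfolding act_def by blast
    show "M *v P \<noteq> 0" using P(2) G_nz[OF two M] by blast
    show "in_H (M *v P)" using P(3) G_props(2)[OF two M] by blast
    show "\<not> in_ell (M *v P)" using P(4) G_props(3)[OF two M] by blast
    fix y' assume y': "y' \<in> act M L" and h: "y' \<noteq> 0 \<and> in_H y' \<and> \<not> in_ell y'"
    obtain y where y: "y \<in> L" "y' = M *v y" using y' unfolding act_def by blast
    have "y \<noteq> 0 \<and> in_H y \<and> \<not> in_ell y"
      using h G_nz[OF two M] G_props(2,3)[OF two M] unfolding y(2) by blast
    then obtain k where "y = k *s P" using Pu y(1) by blast
    then have "y' = k *s (M *v P)" unfolding y(2) using G_lin(2)[OF M] by simp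
    then show "\<exists>k. y' = k *s (M *v P)" by blast
  qed
  then show ?thesis unfolding Tset_def W_line_def using pl sig bf by blast
qed

section \<open>lines through e4\<close>

definition e4 :: "'a::field ^ 5" where "e4 = vec5 0 0 0 1 0"
definition f0 :: "'a::field ^ 5" where "f0 = vec5 0 1 0 0 1"

lemma one_pt_unique:
  assumes Ol: "one_pt_H_minus_ell L" and y: "y \<in> L" "y \<noteq> 0" "in_H y" "\<not> in_ell y"
    and z: "z \<in> L" "z \<noteq> 0" "in_H z" "\<not> in_ell z"
  shows "\<exists>k. y = k *s z"
proof -
  obtain P where Pu: "\<forall>y\<in>L. y \<noteq> 0 \<and> in_H y \<and> \<not> in_ell y \<longrightarrow> (\<exists>k. y = k *s P)"
    using Ol unfolding one_pt_H_minus_ell_def by blast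
  obtain k1 where k1: "y = k1 *s P" using Pu y by blast
  obtain k2 where k2: "z = k2 *s P" using Pu z by blast
  have "k2 \<noteq> 0" using z(2) k2 by auto
  then have "y = (k1 / k2) *s z" unfolding k1 k2 by (simp add: vec_eq_iff)
  then show ?thesis by blast
qed

lemma lines_through_e4:
  fixes L :: "('a::field ^ 5) set"
  assumes L: "L \<in> Tset" and e: "e4 \<in> L"
  shows "\<exists>k. k \<noteq> 0 \<and> L = span2 e4 (vec5 0 1 0 0 k)"
proof -
  have W: "W_line L" and Ol: "one_pt_H_minus_ell L" using L unfolding Tset_def by auto
  obtain u v where uv: "indep2 u v" "L = span2 u v" using W unfolding W_line_def is_pline_def by blast
  have e0: "(e4::'a^5) \<noteq> 0" by (simp add: e4_def vec5_eq_iff)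
  obtain z where z: "indep2 e4 z" "L = span2 e4 z" using span2_change[OF uv(1) _ e0] e uv(2) by blast
  define R where "R = vec5 (z$1) (z$2) (z$3) 0 (z$5)"
  have R1: "R = (\<chi> i. (- z$4) * e4$i + 1 * z$i)" unfolding R_def by (simp add: vec5_eq_iff e4_def)
  have LR: "L = span2 e4 R"
    unfolding z(2)
  proof (rule span2_eqI)
    show "e4 \<in> span2 e4 z" by (rule span2_left)
    show "R \<in> span2 e4 z" unfolding R1 span2_mem by blast
    show "e4 \<in> span2 e4 R" by (rule span2_left)
    have "z = (\<chi> i. (z$4) * e4$i + 1 * R$i)" unfolding R_def by (simp add: vec5_eq_iff e4_def)
    then show "z \<in> span2 e4 R" unfolding span2_mem by blast
  qed
  have RL: "R \<in> L" unfolding LR by (rule span2_right)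
  have eH: "(e4::'a^5) \<noteq> 0 \<and> in_H e4 \<and> \<not> in_ell e4" by (simp add: e4_def vec5_eq_iff in_H_def in_ell_def)
  have "in_Sigma R" using W RL unfolding W_line_def by blast
  then have z1: "z$1 = 0" unfolding R_def in_Sigma_def by simp
  have "Bform e4 R = 0" using W RL e unfolding W_line_def by blast
  then have z3: "z$3 = 0" unfolding R_def Bform_def e4_def by simp
  have z5: "z$5 \<noteq> 0 \<or> z$2 \<noteq> 0"
  proof (rule ccontr)
    assume "\<not> (z$5 \<noteq> 0 \<or> z$2 \<noteq> 0)"
    then have "\<forall>i. (- z$4) * e4$i + 1 * z$i = 0"
      using z1 z3 by (simp add: forall_5 e4_def)
    then have "- z$4 = 0 \<and> (1::'a) = 0" using z(1) unfolding indep2_def by blast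
    then show False by simp
  qed
  have z2: "z$2 \<noteq> 0"
  proof
    assume z2: "z$2 = 0"
    then have z5': "z$5 \<noteq> 0" using z5 by simp
    define e5 where "e5 = (vec5 0 0 0 0 1 :: 'a^5)"
    have "e5 = (1 / z$5) *s R" unfolding e5_def R_def using z1 z2 z3 z5' by (simp add: vec5_eq_iff)
    then have "e5 \<in> L" using span2_smult RL unfolding LR by simp
    moreover have "e5 \<noteq> 0 \<and> in_H e5 \<and> \<not> in_ell e5" by (simp add: e5_def vec5_eq_iff in_H_def in_ell_def)
    ultimately obtain k where "e5 = k *s e4" using one_pt_unique[OF Ol] e eH by blast
    then have "e5$5 = (k *s e4)$5" by simp
    then show False by (simp add: e5_def e4_def)
  qed
  have z5': "z$5 \<noteq> 0"
  proof
    assume z5: "z$5 = 0"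
    define w where "w = (vec5 0 1 0 1 0 :: 'a^5)"
    have "w = (\<chi> i. 1 * e4$i + (1 / z$2) * R$i)" unfolding w_def R_def e4_def using z1 z2 z3 z5 by (simp add: vec5_eq_iff)
    then have "w \<in> L" unfolding LR span2_mem by blast
    moreover have "w \<noteq> 0 \<and> in_H w \<and> \<not> in_ell w" by (simp add: w_def vec5_eq_iff in_H_def in_ell_def)
    ultimately obtain k where "w = k *s e4" using one_pt_unique[OF Ol] e eH by blast
    then have "w$2 = (k *s e4)$2" by simp
    then show False by (simp add: w_def e4_def)
  qed
  define g where "g = (vec5 0 1 0 0 (z$5 / z$2) :: 'a^5)"
  have g: "g = (1 / z$2) *s R" unfolding g_def R_def using z1 z2 z3 by (simp add: vec5_eq_iff)
  have sg: "span2 e4 R = span2 e4 g"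
  proof (rule span2_eqI)
    show "e4 \<in> span2 e4 R" by (rule span2_left)
    show "g \<in> span2 e4 R" unfolding g by (rule span2_smult[OF span2_right])
    show "e4 \<in> span2 e4 g" by (rule span2_left)
    have "R = z$2 *s g" unfolding g using z2 by (simp add: vec_eq_iff)
    then show "R \<in> span2 e4 g" by (simp only:) (rule span2_smult[OF span2_right])
  qed
  have "z$5 / z$2 \<noteq> 0" using z2 z5' by simp
  then show ?thesis using LR sg unfolding g_def by (intro exI[of _ "z$5 / z$2"]) simp
qed


lemma act_comp:
  assumes "\<forall>x. M3 *v x = M1 *v (M2 *v x)"
  shows "act M1 (act M2 L) = act M3 L"
  unfolding act_def image_image using assms by simp

lemma act_id:
  assumes "\<forall>x. M1 *v (M2 *v x) = x"
  shows "act M1 (act M2 L) = L"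
  unfolding act_def image_image using assms by simp

lemma reach:
  fixes \<alpha> :: "'a::field"
  assumes two: "(1::'a) + 1 = 0" and sq: "\<And>n::'a. \<exists>r. r * r = n"
    and irr: "irreducible [:\<alpha>, 1, 1:]" and L: "L \<in> (Tset :: ('a ^ 5) set set)"
  shows "\<exists>M\<in>Ggrp \<alpha>. act M (span2 e4 f0) = L"
proof -
  have Ol: "one_pt_H_minus_ell L" using L unfolding Tset_def by auto
  obtain P where P: "P \<in> L" "P \<noteq> 0" "in_H P" "\<not> in_ell P"
    using Ol unfolding one_pt_H_minus_ell_def by blast
  have P1: "P$1 = 0" and HP: "P$2 * P$5 + P$3 * P$4 = 0" using P(3) unfolding in_H_def by auto
  have nz: "P$4 \<noteq> 0 \<or> P$5 \<noteq> 0" using P(4) P1 unfolding in_ell_def by auto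
  define n where "n = P$4 * P$4 + P$4 * P$5 + \<alpha> * P$5 * P$5"
  have n0: "n \<noteq> 0" unfolding n_def by (rule norm_nz[OF irr nz])
  obtain r where r: "r * r = n" using sq by blast
  have r0: "r \<noteq> 0" using r n0 by auto
  define c where "c = P$4 / r"
  define d where "d = P$5 / r"
  have "c^2 + c*d + \<alpha>*d^2 = n / (r * r)"
    unfolding c_def d_def n_def using r0 by (simp add: power2_eq_square field_simps)
  then have N: "c^2 + c*d + \<alpha>*d^2 = 1" using r n0 by simp
  have HP': "P$2 * P$5 = P$3 * P$4"
  proof -
    have "P$2 * P$5 = - (P$3 * P$4)" using HP by (simp add: eq_neg_iff_add_eq_0)
    then show ?thesis using neg_self[OF two] by simp
  qed
  obtain \<kappa> where k4: "\<kappa> * P$4 = P$2" and k5: "\<kappa> * P$5 = P$3"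
  proof (cases "P$4 = 0")
    case False
    show ?thesis
    proof (rule that[of "P$2 / P$4"])
      show "P$2 / P$4 * P$4 = P$2" using False by simp
      have "P$2 / P$4 * P$5 = (P$2 * P$5) / P$4" by simp
      also have "\<dots> = P$3" using HP' False by simp
      finally show "P$2 / P$4 * P$5 = P$3" .
    qed
  next
    case True
    then have p5: "P$5 \<noteq> 0" using nz by simp
    have "P$2 = 0" using HP' True p5 by simp
    then show ?thesis using True p5 by (intro that[of "P$3 / P$5"]) simp_all
  qed
  define A where "A = Mabcd \<alpha> 1 \<kappa> c d"
  have A: "A \<in> Ggrp \<alpha>" unfolding A_def by (rule GgrpI) (simp_all add: N)
  have AP: "A *v (r *s e4) = P"
    unfolding A_def Mv_mvf mvf_def vec5_eq_iff e4_def
    using r0 P1 k4 k5 by (simp add: c_def d_def field_simps)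
  obtain A' where A': "A' \<in> Ggrp \<alpha>" "\<forall>x. A' *v (A *v x) = x" "\<forall>x. A *v (A' *v x) = x"
    using G_inv[OF two A] by blast
  define L' where "L' = act A' L"
  have L': "L' \<in> Tset" unfolding L'_def by (rule pres[OF two A'(1) L])
  have "A' *v P = r *s e4" using AP A'(2) by metis
  then have "r *s e4 \<in> L'" unfolding L'_def act_def using P(1) by force
  then have "(1 / r) *s (r *s e4) \<in> L'"
    using is_pline_smult L' unfolding Tset_def W_line_def by blast
  moreover have "(1 / r) *s (r *s e4) = (e4 :: 'a ^ 5)" using r0 by (simp add: vec_eq_iff)
  ultimately have "e4 \<in> L'" by simp
  then obtain k where k: "k \<noteq> 0" "L' = span2 e4 (vec5 0 1 0 0 k)"
    using lines_through_e4[OF L'] by blast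
  obtain a0 where a0: "a0 * a0 = inverse k" using sq by blast
  have a00: "a0 \<noteq> 0" using a0 k(1) by auto
  define D where "D = Mabcd \<alpha> a0 0 1 0"
  have D: "D \<in> Ggrp \<alpha>" unfolding D_def by (rule GgrpI) (simp_all add: a00)
  have De4: "D *v e4 = vec5 0 0 0 (inverse a0) 0"
    unfolding D_def Mv_mvf mvf_def vec5_eq_iff e4_def by simp
  have Df0: "D *v f0 = vec5 0 a0 0 0 (inverse a0)"
    unfolding D_def Mv_mvf mvf_def vec5_eq_iff f0_def by simp
  have kk: "k = inverse a0 * inverse a0" using a0 a00 k(1)
    by (metis inverse_inverse_eq inverse_mult_distrib)
  have "act D (span2 e4 f0) = span2 e4 (vec5 0 1 0 0 k)"
    unfolding act_span2[OF D] De4 Df0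
  proof (rule span2_eqI[symmetric])
    show "vec5 0 0 0 (inverse a0) 0 \<in> span2 e4 (vec5 0 1 0 0 k)"
      unfolding span2_mem
      by (rule exI[of _ "inverse a0"], rule exI[of _ 0]) (simp add: vec5_eq_iff e4_def)
    show "vec5 0 a0 0 0 (inverse a0) \<in> span2 e4 (vec5 0 1 0 0 k)"
      unfolding span2_mem
      by (rule exI[of _ 0], rule exI[of _ a0]) (simp add: vec5_eq_iff e4_def kk a00)
    show "e4 \<in> span2 (vec5 0 0 0 (inverse a0) 0) (vec5 0 a0 0 0 (inverse a0))"
      unfolding span2_mem
      by (rule exI[of _ a0], rule exI[of _ 0]) (simp add: vec5_eq_iff e4_def a00)
    show "vec5 0 1 0 0 k \<in> span2 (vec5 0 0 0 (inverse a0) 0) (vec5 0 a0 0 0 (inverse a0))"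
      unfolding span2_mem
      by (rule exI[of _ 0], rule exI[of _ "inverse a0"]) (simp add: vec5_eq_iff kk a00)
  qed
  then have LD: "act D (span2 e4 f0) = L'" using k(2) by simp
  have "L = act A L'" unfolding L'_def using act_id[of A A' L] A'(3) by simp
  also have "\<dots> = act A (act D (span2 e4 f0))" using LD by simp
  finally have LAD: "L = act A (act D (span2 e4 f0))" .
  obtain C where C: "C \<in> Ggrp \<alpha>" "\<forall>x. C *v x = A *v (D *v x)" using G_comp[OF two A D] by blast
  have "act C (span2 e4 f0) = L" unfolding LAD using act_comp[OF C(2)] by simp
  then show ?thesis using C(1) by blast
qed

theorem lemma3p3:
  fixes \<alpha> :: "'a::field" and h :: nat
  assumes "CARD('a) = 2 ^ h"
    and "irreducible [:\<alpha>, 1, 1:]"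
  shows "(\<forall>M\<in>Ggrp \<alpha>. \<forall>L\<in>(Tset :: ('a ^ 5) set set). act M L \<in> Tset)
       \<and> (\<forall>L1\<in>(Tset :: ('a ^ 5) set set). \<forall>L2\<in>Tset. \<exists>M\<in>Ggrp \<alpha>. act M L1 = L2)"
proof
  have two: "(1::'a) + 1 = 0" by (rule char2_of_card[OF assms(1)])
  have sq: "\<And>n::'a. \<exists>r. r * r = n" by (rule sq_surj[OF assms(1)])
  show "\<forall>M\<in>Ggrp \<alpha>. \<forall>L\<in>(Tset :: ('a ^ 5) set set). act M L \<in> Tset"
    using pres[OF two] by blast
  show "\<forall>L1\<in>(Tset :: ('a ^ 5) set set). \<forall>L2\<in>Tset. \<exists>M\<in>Ggrp \<alpha>. act M L1 = L2"
  proof (intro ballI)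
    fix L1 L2 :: "('a ^ 5) set" assume L1: "L1 \<in> Tset" and L2: "L2 \<in> Tset"
    obtain A1 where A1: "A1 \<in> Ggrp \<alpha>" "act A1 (span2 e4 f0) = L1" using reach[OF two sq assms(2) L1] by blast
    obtain A2 where A2: "A2 \<in> Ggrp \<alpha>" "act A2 (span2 e4 f0) = L2" using reach[OF two sq assms(2) L2] by blast
    obtain A1' where A1': "A1' \<in> Ggrp \<alpha>" "\<forall>x. A1' *v (A1 *v x) = x" using G_inv[OF two A1(1)] by blast
    obtain C where C: "C \<in> Ggrp \<alpha>" "\<forall>x. C *v x = A2 *v (A1' *v x)" using G_comp[OF two A2(1) A1'(1)] by blast
    have "\<forall>x. A2 *v x = C *v (A1 *v x)" using C(2) A1'(2) by simp
    then have "act C L1 = L2" unfolding A1(2)[symmetric] A2(2)[symmetric] using act_comp by metis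
    then show "\<exists>M\<in>Ggrp \<alpha>. act M L1 = L2" using C(1) by blast
  qed
qed

end
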